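(* Let $N=\{1,\dots,n\}$, let $\tilde Q\in\mathbb{R}^{n\times n}$ be symmetric positive definite, $\tilde d\in\mathbb{R}^n$, and $a,b\in\mathbb{R}^n$ with $b\le a$ componentwise. Let $A,B\subseteq N$ be disjoint, $I=N\setminus(A\cup B)$, and let $(x,s,t)$ be the KKT solution for $(A,B)$. Let $C=\{i: x_i<b_i \text{ or } s_i<0\}$, $D=\{i: x_i>a_i \text{ or } t_i>0\}$, and let $(y,u,v)$ be the KKT solution for $(C,D)$. Define $S=\{i\in A: s_i\ge0\}$, $T=\{i\in B: t_i\le 0\}$, $U=\{i\in I: x_i<b_i\}$, $V=\{i\in I: x_i>a_i\}$, $R=I\setminus(U\cup V)$, $K=\{i\in S\cup T\cup R: y_i<b_i\}$ and $L=\{i\in S\cup T\cup R: y_i>a_i\}$. With $g(w)=\max(b-w,0)$ and $h(w)=\max(w-a,0)$ (componentwise), we have $$\|g(y)\|^2-\|g(x)\|^2=\sum_{i\in K}|y_i-b_i|^2-\sum_{i\in U}|x_i-b_i|^2$$ and $$\|h(y)\|^2-\|h(x)\|^2=\sum_{i\in L}|y_i-a_i|^2-\sum_{i\in V}|x_i-a_i|^2.$$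
   Context: For disjoint $A_1,A_2\subseteq N$, the KKT solution for $(A_1,A_2)$ is the unique triple $(x,s,t)\in(\mathbb{R}^n)^3$ with $x_{A_1}=b_{A_1}$, $x_{A_2}=a_{A_2}$, $s_i=0$ for $i\notin A_1$, $t_i=0$ for $i\notin A_2$, and $\tilde Qx+\tilde d+s+t=0$. The sets $C$ and $D$ are disjoint. $\|\cdot\|$ is the Euclidean norm. *)

theory Defs
  imports "HOL-Analysis.Analysis"
begin

text \<open>Index set N = {1..n} is modelled by a finite type 'n; vectors are real^'n.\<close>

definition is_KKT_solution ::
  "real^'n^'n \<Rightarrow> real^'n \<Rightarrow> real^'n \<Rightarrow> real^'n \<Rightarrow> 'n set \<Rightarrow> 'n set
    \<Rightarrow> real^'n \<Rightarrow> real^'n \<Rightarrow> real^'n \<Rightarrow> bool" where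
  "is_KKT_solution Q d a b A1 A2 x s t \<longleftrightarrow>
     (\<forall>i\<in>A1. x $ i = b $ i) \<and> (\<forall>i\<in>A2. x $ i = a $ i) \<and>
     (\<forall>i. i \<notin> A1 \<longrightarrow> s $ i = 0) \<and> (\<forall>i. i \<notin> A2 \<longrightarrow> t $ i = 0) \<and>
     Q *v x + d + s + t = 0"

definition KKT_solution ::
  "real^'n^'n \<Rightarrow> real^'n \<Rightarrow> real^'n \<Rightarrow> real^'n \<Rightarrow> 'n set \<Rightarrow> 'n set
    \<Rightarrow> (real^'n) \<times> (real^'n) \<times> (real^'n)" where
  "KKT_solution Q d a b A1 A2 =
     (THE (x, s, t). is_KKT_solution Q d a b A1 A2 x s t)"

definition gpos :: "real^'n \<Rightarrow> real^'n \<Rightarrow> real^'n" where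
  "gpos b w = (\<chi> i. max (b $ i - w $ i) 0)"

definition hpos :: "real^'n \<Rightarrow> real^'n \<Rightarrow> real^'n" where
  "hpos a w = (\<chi> i. max (w $ i - a $ i) 0)"

end

theory Submission imports Defs begin

lemma KKT_ex:
  fixes Q :: "real^'n^'n" and d a b :: "real^'n"
  assumes pdQ: "\<forall>z. z \<noteq> 0 \<longrightarrow> z \<bullet> (Q *v z) > 0" and disj: "A1 \<inter> A2 = {}"
  shows "\<exists>x s t. is_KKT_solution Q d a b A1 A2 x s t"
proof -
  define F where "F = - (A1 \<union> A2)"
  define L where "L = (\<lambda>z::real^'n. \<chi> i. if i \<in> F then (Q *v z) $ i else z $ i)"
  have linL: "linear L"
    unfolding L_def
    by (rule linearI) (auto simp: vec_eq_iff matrix_vector_right_distrib matrix_vector_mult_scaleR)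
  have inj: "inj L"
  proof (subst linear_injective_0[OF linL], intro allI impI)
    fix z assume Lz: "L z = 0"
    have z0: "\<And>i. i \<notin> F \<Longrightarrow> z $ i = 0" and q0: "\<And>i. i \<in> F \<Longrightarrow> (Q *v z) $ i = 0"
      using Lz by (auto simp: L_def vec_eq_iff split: if_splits dest: spec)
    have "z \<bullet> (Q *v z) = (\<Sum>i\<in>UNIV. z $ i * (Q *v z) $ i)" by (simp add: inner_vec_def)
    also have "\<dots> = 0" by (rule sum.neutral) (metis q0 z0 mult_zero_left mult_zero_right)
    finally show "z = 0" using pdQ by force
  qed
  have surj: "surj L" using linear_injective_imp_surjective[OF linL inj] by simp
  define x0 where "x0 = (\<chi> i. if i \<in> A1 then b $ i else if i \<in> A2 then a $ i else 0)"
  obtain z where z: "L z = - (\<chi> i. if i \<in> F then (Q *v x0 + d) $ i else 0)"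
    using surj by (metis surjD)
  define x where "x = x0 + z"
  define r where "r = - (Q *v x + d)"
  define s where "s = (\<chi> i. if i \<in> A1 then r $ i else 0)"
  define t where "t = (\<chi> i. if i \<in> A2 \<and> i \<notin> A1 then r $ i else 0)"
  have zF: "\<And>i. i \<notin> F \<Longrightarrow> z $ i = 0" and qF: "\<And>i. i \<in> F \<Longrightarrow> (Q *v z) $ i = - (Q *v x0 + d) $ i"
    using z by (auto simp: L_def vec_eq_iff split: if_splits dest: spec)
  have rF: "\<And>i. i \<in> F \<Longrightarrow> r $ i = 0"
    using qF by (simp add: r_def x_def matrix_vector_right_distrib)
  have "is_KKT_solution Q d a b A1 A2 x s t"
    unfolding is_KKT_solution_def
  proof (intro conjI ballI allI impI)
    show "Q *v x + d + s + t = 0"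
      unfolding vec_eq_iff using rF by (auto simp: s_def t_def r_def F_def) (metis add.inverse_inverse add.left_inverse)
  qed (use zF disj in \<open>auto simp: x_def x0_def s_def t_def F_def\<close>)
  then show ?thesis by blast
qed

lemma KKT_uniq:
  fixes Q :: "real^'n^'n" and d a b :: "real^'n"
  assumes pdQ: "\<forall>z. z \<noteq> 0 \<longrightarrow> z \<bullet> (Q *v z) > 0" and disj: "A1 \<inter> A2 = {}"
    and k1: "is_KKT_solution Q d a b A1 A2 x s t" and k2: "is_KKT_solution Q d a b A1 A2 x' s' t'"
  shows "x = x' \<and> s = s' \<and> t = t'"
proof -
  define z where "z = x - x'"
  have z0: "\<And>i. i \<in> A1 \<or> i \<in> A2 \<Longrightarrow> z $ i = 0"
    using k1 k2 by (auto simp: is_KKT_solution_def z_def)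
  have s0: "\<And>i. i \<notin> A1 \<Longrightarrow> s $ i = s' $ i" and t0: "\<And>i. i \<notin> A2 \<Longrightarrow> t $ i = t' $ i"
    using k1 k2 by (auto simp: is_KKT_solution_def)
  have e1: "Q *v x + d + s + t = 0" and e2: "Q *v x' + d + s' + t' = 0"
    using k1 k2 by (auto simp: is_KKT_solution_def)
  have eq: "Q *v z = - ((s - s') + (t - t'))"
    using e1 e2 unfolding z_def by (simp add: matrix_vector_mult_diff_distrib algebra_simps vec_eq_iff)
      (metis add.commute add_diff_cancel_left' diff_add_cancel)
  have "z \<bullet> (Q *v z) = (\<Sum>i\<in>UNIV. z $ i * (Q *v z) $ i)" by (simp add: inner_vec_def)
  also have "\<dots> = 0"
  proof (rule sum.neutral, intro ballI)
    fix i show "z $ i * (Q *v z) $ i = 0"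
      using z0[of i] s0[of i] t0[of i] eq by (cases "i \<in> A1 \<or> i \<in> A2") auto
  qed
  finally have "z = 0" using pdQ by force
  then have xx: "x = x'" by (simp add: z_def)
  have "(s - s') + (t - t') = 0" using eq \<open>z = 0\<close> by (simp add: algebra_simps vec_eq_iff)
  then have st: "\<And>i. s $ i - s' $ i + (t $ i - t' $ i) = 0" by (simp add: vec_eq_iff)
  have "s = s'"
  proof (rule vec_eq_iff[THEN iffD2, rule_format])
    fix i show "s $ i = s' $ i"
      proof (cases "i \<in> A1")
      case True then have "i \<notin> A2" using disj by blast
      then show ?thesis using st[of i] t0[of i] by simp
    qed (use s0 in auto)
  qed
  moreover have "t = t'"
  proof (rule vec_eq_iff[THEN iffD2, rule_format])
    fix i show "t $ i = t' $ i"
      proof (cases "i \<in> A2")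
      case True then have "i \<notin> A1" using disj by blast
      then show ?thesis using st[of i] s0[of i] by simp
    qed (use t0 in auto)
  qed
  ultimately show ?thesis using xx by simp
qed

lemma KKT_sol:
  fixes Q :: "real^'n^'n" and d a b :: "real^'n"
  assumes pdQ: "\<forall>z. z \<noteq> 0 \<longrightarrow> z \<bullet> (Q *v z) > 0" and disj: "A1 \<inter> A2 = {}"
    and h: "KKT_solution Q d a b A1 A2 = (x, s, t)"
  shows "is_KKT_solution Q d a b A1 A2 x s t"
proof -
  let ?P = "\<lambda>p. case p of (x, s, t) \<Rightarrow> is_KKT_solution Q d a b A1 A2 x s t"
  have ex1: "\<exists>!p. ?P p"
  proof -
    obtain x0 s0 t0 where k: "is_KKT_solution Q d a b A1 A2 x0 s0 t0"
      using KKT_ex[OF pdQ disj] by blast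
    show ?thesis
    proof (rule ex1I[of _ "(x0, s0, t0)"])
      show "?P (x0, s0, t0)" using k by simp
    next
      fix p assume "?P p"
      then show "p = (x0, s0, t0)" using KKT_uniq[OF pdQ disj _ k]
        by (cases p) auto
    qed
  qed
  have "?P (THE p. ?P p)" using theI'[OF ex1] .
  moreover have "(THE p. ?P p) = (x, s, t)" using h by (simp add: KKT_solution_def)
  ultimately show ?thesis by simp
qed

lemma norm_gpos: "(norm (gpos b (w::real^'n)))\<^sup>2 = (\<Sum>i\<in>{i. w $ i < b $ i}. \<bar>w $ i - b $ i\<bar>\<^sup>2)"
proof -
  have "(norm (gpos b w))\<^sup>2 = (\<Sum>i\<in>UNIV. (gpos b w $ i)\<^sup>2)"
    unfolding power2_norm_eq_inner inner_vec_def by (simp add: power2_eq_square)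
  also have "\<dots> = (\<Sum>i\<in>UNIV. if w $ i < b $ i then \<bar>w $ i - b $ i\<bar>\<^sup>2 else 0)"
    by (rule sum.cong) (auto simp: gpos_def max_def power2_commute)
  also have "\<dots> = (\<Sum>i\<in>{i. w $ i < b $ i}. \<bar>w $ i - b $ i\<bar>\<^sup>2)"
    by (simp add: sum.inter_filter[symmetric])
  finally show ?thesis .
qed

lemma norm_hpos: "(norm (hpos a (w::real^'n)))\<^sup>2 = (\<Sum>i\<in>{i. w $ i > a $ i}. \<bar>w $ i - a $ i\<bar>\<^sup>2)"
proof -
  have "(norm (hpos a w))\<^sup>2 = (\<Sum>i\<in>UNIV. (hpos a w $ i)\<^sup>2)"
    unfolding power2_norm_eq_inner inner_vec_def by (simp add: power2_eq_square)
  also have "\<dots> = (\<Sum>i\<in>UNIV. if w $ i > a $ i then \<bar>w $ i - a $ i\<bar>\<^sup>2 else 0)"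
    by (rule sum.cong) (auto simp: hpos_def max_def)
  also have "\<dots> = (\<Sum>i\<in>{i. w $ i > a $ i}. \<bar>w $ i - a $ i\<bar>\<^sup>2)"
    by (simp add: sum.inter_filter[symmetric])
  finally show ?thesis .
qed


theorem mainTheorem2:
  fixes Q :: "real^'n^'n" and d a b :: "real^'n" and A B :: "'n set"
  assumes symQ: "transpose Q = Q"
    and pdQ: "\<forall>z. z \<noteq> 0 \<longrightarrow> z \<bullet> (Q *v z) > 0"
    and ba: "\<forall>i. b $ i \<le> a $ i"
    and disjAB: "A \<inter> B = {}"
    and xst: "KKT_solution Q d a b A B = (x, s, t)"
    and Cdef: "C = {i. x $ i < b $ i \<or> s $ i < 0}"
    and Ddef: "D = {i. x $ i > a $ i \<or> t $ i > 0}"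
    and yuv: "KKT_solution Q d a b C D = (y, u, v)"
    and Idef: "I = UNIV - (A \<union> B)"
    and Sdef: "S = {i\<in>A. s $ i \<ge> 0}"
    and Tdef: "T = {i\<in>B. t $ i \<le> 0}"
    and Udef: "U = {i\<in>I. x $ i < b $ i}"
    and Vdef: "V = {i\<in>I. x $ i > a $ i}"
    and Rdef: "R = I - (U \<union> V)"
    and Kdef: "K = {i\<in>S \<union> T \<union> R. y $ i < b $ i}"
    and Ldef: "L = {i\<in>S \<union> T \<union> R. y $ i > a $ i}"
  shows "((norm (gpos b y))\<^sup>2 - (norm (gpos b x))\<^sup>2
           = (\<Sum>i\<in>K. \<bar>y $ i - b $ i\<bar>\<^sup>2) - (\<Sum>i\<in>U. \<bar>x $ i - b $ i\<bar>\<^sup>2)) \<and>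
         ((norm (hpos a y))\<^sup>2 - (norm (hpos a x))\<^sup>2
           = (\<Sum>i\<in>L. \<bar>y $ i - a $ i\<bar>\<^sup>2) - (\<Sum>i\<in>V. \<bar>x $ i - a $ i\<bar>\<^sup>2))"

proof -
  have kx: "is_KKT_solution Q d a b A B x s t" using KKT_sol[OF pdQ disjAB xst] .
  have xa: "\<And>i. i \<in> A \<Longrightarrow> x $ i = b $ i" and xb: "\<And>i. i \<in> B \<Longrightarrow> x $ i = a $ i"
      and sa: "\<And>i. i \<notin> A \<Longrightarrow> s $ i = 0" and tb: "\<And>i. i \<notin> B \<Longrightarrow> t $ i = 0"
      using kx unfolding is_KKT_solution_def by auto
  have CD: "C \<inter> D = {}"
  proof (rule ccontr)
    assume "C \<inter> D \<noteq> {}" then obtain i where iC: "i \<in> C" and iD: "i \<in> D" by blast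
    have bai: "b $ i \<le> a $ i" using ba by simp
    show False
    proof (cases "i \<in> A")
      case True
      then have "i \<notin> B" using disjAB by blast
      then show ?thesis using True iD xa tb bai unfolding Ddef by auto
    next
      case False
      then show ?thesis using iC iD xb sa tb bai unfolding Cdef Ddef by (cases "i \<in> B") auto
    qed
  qed
  have ky: "is_KKT_solution Q d a b C D y u v" using KKT_sol[OF pdQ CD yuv] .
  have yc: "\<And>i. i \<in> C \<Longrightarrow> y $ i = b $ i" and yd: "\<And>i. i \<in> D \<Longrightarrow> y $ i = a $ i"
      using ky unfolding is_KKT_solution_def by auto
  have U: "{i. x $ i < b $ i} = U"
  proof (rule set_eqI)
    fix i have bai: "b $ i \<le> a $ i" using ba by simp
    show "i \<in> {i. x $ i < b $ i} \<longleftrightarrow> i \<in> U"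
      using xa[of i] xb[of i] bai unfolding Udef Idef by auto
  qed
  have V: "{i. x $ i > a $ i} = V"
  proof (rule set_eqI)
    fix i have bai: "b $ i \<le> a $ i" using ba by simp
    show "i \<in> {i. x $ i > a $ i} \<longleftrightarrow> i \<in> V"
      using xa[of i] xb[of i] bai unfolding Vdef Idef by auto
  qed
  have STR: "S \<union> T \<union> R = - (C \<union> D)"
  proof (rule set_eqI)
    fix i
    have bai: "b $ i \<le> a $ i" using ba by simp
    show "i \<in> S \<union> T \<union> R \<longleftrightarrow> i \<in> - (C \<union> D)"
    proof (cases "i \<in> A")
      case True
      then have "i \<notin> B" using disjAB by blast
      then show ?thesis using True xa tb bai unfolding Sdef Tdef Rdef Idef Cdef Ddef by auto
    next
      case nA: False
      show ?thesis
      proof (cases "i \<in> B")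
        case True
        then show ?thesis using nA xb sa bai unfolding Sdef Tdef Rdef Idef Cdef Ddef by auto
      next
        case False
        then show ?thesis using nA sa tb bai unfolding Sdef Tdef Rdef Idef Udef Vdef Cdef Ddef by auto
      qed
    qed
  qed
  have K: "{i. y $ i < b $ i} = K"
  proof (rule set_eqI)
    fix i have bai: "b $ i \<le> a $ i" using ba by simp
    show "i \<in> {i. y $ i < b $ i} \<longleftrightarrow> i \<in> K"
      using yc[of i] yd[of i] bai unfolding Kdef STR by auto
  qed
  have L: "{i. y $ i > a $ i} = L"
  proof (rule set_eqI)
    fix i have bai: "b $ i \<le> a $ i" using ba by simp
    show "i \<in> {i. y $ i > a $ i} \<longleftrightarrow> i \<in> L"
      using yc[of i] yd[of i] bai unfolding Ldef STR by auto
  qed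
  show ?thesis unfolding norm_gpos norm_hpos U V K L by simp
qed

end
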